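(* Let $H=(V,E)$ be an $n$-vertex undirected multigraph without self-loops and with minimum degree at least $3$. Let $\gamma\ge 1$, let $\Sigma$ be a set, and suppose each edge $e\in E$ is assigned a set $w_e\subseteq\Sigma$ with $|w_e|\le\gamma$, such that every $c\in\Sigma$ satisfies $|\{e\in E: c\in w_e\}|\le\gamma$. Let $\beta=\lceil\log_{3/2}(12\gamma^2)\rceil$. Then there exist a tree $T_0=(V_0,E_0)$ that is a subgraph of $H$ and a vertex $r_0\in V_0$ such that: (1) $|V_0|\le 4(\log_{3/2}n+2)$; (2) there exist two distinct edges $e_1,e_2\in E\setminus E_0$ each having both endpoints in $V_0$; (3) $T_0$ has at most $4$ leaves; (4) for every pair of edges $e_1,e_2\in E_0$ with $w_{e_1}\cap w_{e_2}\neq\emptyset$ we have $|\mathrm{dist}_{T_0}(r_0,e_1)-\mathrm{dist}_{T_0}(r_0,e_2)|\le\beta$, where for an edge $uv$, $\mathrm{dist}_{T_0}(r_0,uv)=\min(\mathrm{dist}_{T_0}(r_0,u),\mathrm{dist}_{T_0}(r_0,v))$.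
   Context: Parallel edges are allowed in $H$; distinct parallel edges are distinct elements of $E$. $\mathrm{dist}_{T_0}$ denotes the distance in the tree $T_0$. *)

theory Defs
  imports Complex_Main
begin

text \<open>Undirected multigraphs: vertices V, edge set E (edges are abstract elements, so
parallel edges are distinct elements), and an endpoint map ends :: edge => vertex set.
An edge without self-loop has exactly two endpoints.\<close>

definition loopless_multigraph :: "'v set \<Rightarrow> 'e set \<Rightarrow> ('e \<Rightarrow> 'v set) \<Rightarrow> bool" where
  "loopless_multigraph V E ends \<longleftrightarrow> finite V \<and> finite E \<and>
     (\<forall>e\<in>E. ends e \<subseteq> V \<and> card (ends e) = 2)"

definition mdegree :: "'e set \<Rightarrow> ('e \<Rightarrow> 'v set) \<Rightarrow> 'v \<Rightarrow> nat" where
  "mdegree E ends v = card {e\<in>E. v \<in> ends e}"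

definition mwalk :: "'e set \<Rightarrow> ('e \<Rightarrow> 'v set) \<Rightarrow> 'v list \<Rightarrow> 'e list \<Rightarrow> bool" where
  "mwalk E ends vs es \<longleftrightarrow> length vs = Suc (length es) \<and> set es \<subseteq> E \<and>
     (\<forall>i<length es. ends (es ! i) = {vs ! i, vs ! Suc i})"

definition mconnected :: "'v set \<Rightarrow> 'e set \<Rightarrow> ('e \<Rightarrow> 'v set) \<Rightarrow> bool" where
  "mconnected V E ends \<longleftrightarrow> (\<forall>u\<in>V. \<forall>v\<in>V. \<exists>vs es. mwalk E ends vs es \<and> hd vs = u \<and> last vs = v)"

text \<open>A cycle: distinct vertices v_0..v_(k-1), distinct edges e_0..e_(k-1), k >= 1,
e_i joining v_i and v_(i+1 mod k).  Two parallel edges form a cycle of length 2.\<close>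
definition has_mcycle :: "'e set \<Rightarrow> ('e \<Rightarrow> 'v set) \<Rightarrow> bool" where
  "has_mcycle E ends \<longleftrightarrow> (\<exists>vs es. length es \<ge> 1 \<and> length vs = length es \<and>
      distinct vs \<and> distinct es \<and> set es \<subseteq> E \<and>
      (\<forall>i<length es. ends (es ! i) = {vs ! i, vs ! (Suc i mod length es)}))"

definition is_mtree :: "'v set \<Rightarrow> 'e set \<Rightarrow> ('e \<Rightarrow> 'v set) \<Rightarrow> bool" where
  "is_mtree V0 E0 ends \<longleftrightarrow> finite V0 \<and> V0 \<noteq> {} \<and> finite E0 \<and>
     (\<forall>e\<in>E0. ends e \<subseteq> V0) \<and> mconnected V0 E0 ends \<and> \<not> has_mcycle E0 ends"

definition mdist :: "'e set \<Rightarrow> ('e \<Rightarrow> 'v set) \<Rightarrow> 'v \<Rightarrow> 'v \<Rightarrow> nat" where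
  "mdist E ends u v = (LEAST k. \<exists>vs es. mwalk E ends vs es \<and> hd vs = u \<and> last vs = v \<and> length es = k)"

definition mdist_edge :: "'e set \<Rightarrow> ('e \<Rightarrow> 'v set) \<Rightarrow> 'v \<Rightarrow> 'e \<Rightarrow> nat" where
  "mdist_edge E ends r e = Min ((\<lambda>x. mdist E ends r x) ` ends e)"

definition mleaves :: "'v set \<Rightarrow> 'e set \<Rightarrow> ('e \<Rightarrow> 'v set) \<Rightarrow> 'v set" where
  "mleaves V E ends = {v\<in>V. mdegree E ends v = 1}"

end

theory Submission
  imports Defs
begin


lemma growth:
  fixes a d :: "nat \<Rightarrow> nat" and \<gamma> :: real and \<beta> R :: nat
  assumes a0: "a 0 = 1"
    and rec: "\<forall>k<R. 2 * real (a k) + (if k = 0 then 1 else 0)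
               \<le> real (a (Suc k)) + real (d k) + \<gamma>^2 * real (\<Sum>j<k-\<beta>. a (Suc j))"
    and dsum: "(\<Sum>k<R. d k) \<le> 2" and d0: "d 0 \<le> 1"
    and beta: "(3/2::real)^\<beta> \<ge> 12*\<gamma>^2" and gamma: "\<gamma> \<ge> 1"
  shows "real (a R) \<ge> (3/2)^R"
proof -
  define s where "s m = (\<Sum>j<m. a (Suc j))" for m
  have rec': "2 * real (a k) + (if k = 0 then 1 else 0) \<le> real (a (Suc k)) + real (d k) + \<gamma>^2 * real (s (k-\<beta>))"
    if "k < R" for k using rec that unfolding s_def by blast
  have b7: "\<beta> \<ge> 7"
  proof (rule ccontr)
    assume "\<not> \<beta> \<ge> 7"
    hence "(3/2::real)^\<beta> \<le> (3/2)^6" by (intro power_increasing) auto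
    moreover have "12 \<le> 12*\<gamma>^2" using gamma by (simp add: one_le_power)
    moreover have "(3/2::real)^6 < 12" by (simp add: power_divide)
    ultimately show False using beta by linarith
  qed
  have s0: "s 0 = 0" unfolding s_def by simp
  have sSuc: "s (Suc m) = s m + a (Suc m)" for m unfolding s_def by simp
  have dk: "d 0 + d k \<le> 2" if "0 < k" "k < R" for k
  proof -
    have "sum d {0,k} \<le> sum d {..<R}" by (rule sum_mono2) (use that in auto)
    thus ?thesis using that dsum by simp
  qed
  have dk1: "d 0 + d 1 + d k \<le> 2" if "1 < k" "k < R" for k
  proof -
    have "sum d {0,1,k} \<le> sum d {..<R}" by (rule sum_mono2) (use that in auto)
    thus ?thesis using that dsum by simp
  qed
  have dle: "d k \<le> 2" if "k < R" for k
  proof -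
    have "sum d {k} \<le> sum d {..<R}" by (rule sum_mono2) (use that in auto)
    thus ?thesis using that dsum by simp
  qed
  define Inv where "Inv k = (\<forall>m. 1 \<le> m \<and> m \<le> k \<longrightarrow> (3/2::real)^m \<le> a m \<and> real (s m) \<le> 3 * a m \<and>
      (\<forall>j. 1 \<le> j \<and> j \<le> m \<longrightarrow> (8/9) * (3/2::real)^(m-j) * a j \<le> a m))" for k
  have a1: "a 1 \<ge> 2" if "0 < R"
    using rec'[of 0] that a0 d0 s0 by simp
  have main: "k \<le> R \<Longrightarrow> 1 \<le> k \<Longrightarrow> Inv k" for k
  proof (induction k)
    case 0 then show ?case by simp
  next
    case (Suc k)
    show ?case
    proof (cases "k = 0")
      case True
      have "a 1 \<ge> 2" using a1 Suc by simp
      then show ?thesis using True unfolding Inv_def s_def by (auto simp: le_Suc_eq)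
    next
      case False
      hence IH: "Inv k" using Suc by simp
      have kR: "k < R" using Suc by simp
      have Ik: "(3/2::real)^k \<le> a k" "real (s k) \<le> 3 * a k"
          "\<And>j. 1 \<le> j \<Longrightarrow> j \<le> k \<Longrightarrow> (8/9) * (3/2::real)^(k-j) * a j \<le> a k"
        using IH False unfolding Inv_def by auto
      have rk: "2 * real (a k) \<le> real (a (Suc k)) + real (d k) + \<gamma>^2 * real (s (k-\<beta>))"
        using rec'[OF kR] False by simp
      have cases: "(3/2) * real (a k) \<le> a (Suc k) \<or> (k = 1 \<and> a 1 = 3 \<and> a 2 \<ge> 4)"
      proof (cases "k \<le> \<beta>")
        case True
        hence r2: "2 * real (a k) \<le> real (a (Suc k)) + real (d k)" using rk s0 by simp
        show ?thesis
        proof (cases "2 * d k \<le> a k")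
          case True then show ?thesis using r2 by linarith
        next
          case nd: False
          have "a k \<ge> 2"
          proof -
            have "(3/2::real)^1 \<le> (3/2)^k" using False by (intro power_increasing) auto
            hence "1 < real (a k)" using Ik(1) by simp
            thus ?thesis by linarith
          qed
          hence d2: "d k = 2" using nd dle[OF kR] by linarith
          hence dd0: "d 0 = 0" using dk[of k] False kR by simp
          have a13: "a 1 \<ge> 3" using rec'[of 0] kR a0 dd0 s0 by simp
          show ?thesis
          proof (cases "k = 1")
            case True
            have a13': "a 1 = 3" using nd d2 a13 True by simp
            moreover have "real (a 2) \<ge> 4" using r2 True d2 a13' by (simp add: numeral_2_eq_2)
            ultimately show ?thesis using True by simp
          next
            case k1: False
            hence "d 1 = 0" using dk1[of k] False kR d2 by simp
            have r1: "2 * real (a 1) + (if (1::nat) = 0 then 1 else 0) \<le> real (a (Suc 1)) + real (d 1) + \<gamma>^2 * real (s (1-\<beta>))"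
              using rec'[of 1] kR k1 False by linarith
            have "1 - \<beta> = 0" using b7 by simp
            hence "2 * real (a 1) \<le> real (a 2) + real (d 1)" using r1 s0 by (simp add: numeral_2_eq_2)
            hence "a 2 \<ge> 6" using \<open>d 1 = 0\<close> a13 by linarith
            moreover have "(8/9) * (3/2::real)^(k-2) * a 2 \<le> a k" using Ik(3)[of 2] k1 False by simp
            moreover have "(1::real) \<le> (3/2)^(k-2)" by (simp add: one_le_power)
            moreover have "(1::real) * 6 \<le> (3/2::real)^(k-2) * real (a 2)"
              by (rule mult_mono) (use \<open>a 2 \<ge> 6\<close> \<open>(1::real) \<le> (3/2)^(k-2)\<close> in auto)
            ultimately have "(8/9) * 6 \<le> real (a k)" by (simp add: mult.assoc)
            then show ?thesis using nd d2 by linarith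
          qed
        qed
      next
        case False
        define m0 where "m0 = k - \<beta>"
        have m0: "1 \<le> m0" "m0 \<le> k" "k - m0 = \<beta>" using False unfolding m0_def by auto
        have sm: "real (s m0) \<le> 3 * a m0" and am: "(8/9) * (3/2::real)^\<beta> * a m0 \<le> a k"
          using IH m0 unfolding Inv_def by auto
        have "(8/9) * (12*\<gamma>^2) * a m0 \<le> (8/9) * (3/2::real)^\<beta> * a m0"
          using beta by (intro mult_right_mono) auto
        hence g1: "(32/3) * (\<gamma>^2 * a m0) \<le> a k" using am by (simp add: algebra_simps)
        have g2: "\<gamma>^2 * real (s m0) \<le> \<gamma>^2 * (3 * a m0)" using sm by (intro mult_left_mono) auto
        have g: "\<gamma>^2 * real (s m0) \<le> (9/32) * a k"
          using g1 g2 by (simp add: algebra_simps)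
        have "(3/2::real)^8 \<le> (3/2)^k" using False b7 by (intro power_increasing) auto
        moreover have "(25::real) \<le> (3/2)^8" by (simp add: power_divide)
        ultimately have "25 \<le> real (a k)" using Ik(1) by linarith
        moreover have "real (d k) \<le> 2" using dle[OF kR] by simp
        ultimately show ?thesis using rk g unfolding m0_def by linarith
      qed
      show ?thesis unfolding Inv_def
      proof (intro allI impI)
        fix m assume m: "1 \<le> m \<and> m \<le> Suc k"
        show "(3/2::real)^m \<le> a m \<and> real (s m) \<le> 3 * a m \<and>
           (\<forall>j. 1 \<le> j \<and> j \<le> m \<longrightarrow> (8/9) * (3/2::real)^(m-j) * a j \<le> a m)"
        proof (cases "m \<le> k")
          case True then show ?thesis using IH m unfolding Inv_def by blast
        next
          case mk: False
          hence mS: "m = Suc k" using m by simp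
          from cases show ?thesis
          proof
            assume N: "(3/2) * real (a k) \<le> a (Suc k)"
            have 1: "(3/2::real)^(Suc k) \<le> a (Suc k)" using N Ik(1) by simp
            have 2: "real (s (Suc k)) \<le> 3 * a (Suc k)" using N Ik(2) sSuc[of k] by simp
            have 3: "(8/9) * (3/2::real)^(Suc k-j) * a j \<le> a (Suc k)" if "1 \<le> j" "j \<le> Suc k" for j
            proof (cases "j = Suc k")
              case True then show ?thesis by simp
            next
              case False
              hence "Suc k - j = Suc (k - j)" using that by simp
              hence "(8/9) * (3/2::real)^(Suc k-j) * a j = (3/2) * ((8/9) * (3/2::real)^(k-j) * a j)" by simp
              also have "\<dots> \<le> (3/2) * a k" using mult_left_mono[OF Ik(3)[of j], of "3/2"] that False by linarith
              finally show ?thesis using N by simp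
            qed
            show ?thesis using 1 2 3 mS by blast
          next
            assume X: "k = 1 \<and> a 1 = 3 \<and> a 2 \<ge> 4"
            have "real (a 2) \<ge> 4" using X by simp
            moreover have "s 2 = a 1 + a 2" unfolding s_def by (simp add: numeral_2_eq_2)
            ultimately show ?thesis using X mS by (auto simp: le_Suc_eq numeral_2_eq_2)
          qed
        qed
      qed
    qed
  qed
  show ?thesis
  proof (cases "R = 0")
    case True then show ?thesis using a0 by simp
  next
    case False then show ?thesis using main[of R] unfolding Inv_def by auto
  qed
qed


definition gtree :: "'v set \<Rightarrow> 'e set \<Rightarrow> ('e \<Rightarrow> 'v set) \<Rightarrow> ('e \<Rightarrow> 'c set) \<Rightarrow> nat \<Rightarrow> nat \<Rightarrow> 'v
   \<Rightarrow> 'v set \<Rightarrow> ('v \<Rightarrow> 'e) \<Rightarrow> ('v \<Rightarrow> 'v) \<Rightarrow> ('v \<Rightarrow> nat) \<Rightarrow> bool" where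
  "gtree V E ends w \<beta> R r U par pv \<delta> \<longleftrightarrow> U \<subseteq> V \<and> r \<in> U \<and> \<delta> r = 0 \<and> (\<forall>x\<in>U. \<delta> x \<le> R) \<and>
     (\<forall>x\<in>U-{r}. par x \<in> E \<and> pv x \<in> U \<and> ends (par x) = {x, pv x} \<and> \<delta> x = Suc (\<delta> (pv x))) \<and>
     (\<forall>x\<in>U-{r}. \<forall>y\<in>U-{r}. w (par x) \<inter> w (par y) \<noteq> {} \<longrightarrow> \<delta> x \<le> \<delta> y + \<beta>)"

definition gcomplete :: "'e set \<Rightarrow> ('e \<Rightarrow> 'v set) \<Rightarrow> ('e \<Rightarrow> 'c set) \<Rightarrow> nat \<Rightarrow> 'v
   \<Rightarrow> 'v set \<Rightarrow> ('v \<Rightarrow> 'e) \<Rightarrow> ('v \<Rightarrow> nat) \<Rightarrow> nat \<Rightarrow> bool" where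
  "gcomplete E ends w \<beta> r U par \<delta> i \<longleftrightarrow> (\<forall>x\<in>U. \<delta> x < i \<longrightarrow> (\<forall>e\<in>E. x \<in> ends e \<longrightarrow> e \<notin> par ` (U - {r}) \<longrightarrow>
      \<not> ends e \<subseteq> U \<longrightarrow> (\<exists>y\<in>U-{r}. \<delta> y + \<beta> \<le> \<delta> x \<and> w e \<inter> w (par y) \<noteq> {})))"

lemma card2_eq: "card A = 2 \<Longrightarrow> x \<in> A \<Longrightarrow> u \<in> A \<Longrightarrow> x \<noteq> u \<Longrightarrow> A = {x, u}"
  by (metis card_2_iff doubleton_eq_iff insertE singletonD)

lemma construct:
  assumes H: "loopless_multigraph V E ends" and rV: "r \<in> V"
  shows "i \<le> R \<Longrightarrow> \<exists>U par pv \<delta>. gtree V E ends w \<beta> R r U par pv \<delta> \<and> (\<forall>x\<in>U. \<delta> x \<le> i) \<and>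
            gcomplete E ends w \<beta> r U par \<delta> i"
proof (induction i)
  case 0
  have "gtree V E ends w \<beta> R r {r} par pv (\<lambda>_. 0)" for par pv
    using rV unfolding gtree_def by auto
  moreover have "gcomplete E ends w \<beta> r {r} par (\<lambda>_. 0) 0" for par
    unfolding gcomplete_def by auto
  ultimately show ?case by blast
next
  case (Suc i)
  then obtain U par pv \<delta> where T: "gtree V E ends w \<beta> R r U par pv \<delta>" and Ti: "\<forall>x\<in>U. \<delta> x \<le> i"
    and Tc: "gcomplete E ends w \<beta> r U par \<delta> i" by auto
  have finV: "finite V" using H unfolding loopless_multigraph_def by auto
  define P where "P t = (case t of (U', par', pv', \<delta>') \<Rightarrow> gtree V E ends w \<beta> R r U' par' pv' \<delta>' \<and> U \<subseteq> U' \<and>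
      (\<forall>x\<in>U'-U. \<delta>' x = Suc i) \<and> (\<forall>x\<in>U. par' x = par x \<and> pv' x = pv x \<and> \<delta>' x = \<delta> x))" for t
  have P0: "P (U, par, pv, \<delta>)" unfolding P_def using T by auto
  have Pb: "\<forall>t. P t \<longrightarrow> (card \<circ> fst) t < Suc (card V)"
  proof (intro allI impI)
    fix t assume "P t"
    then obtain U' par' pv' \<delta>' where t: "t = (U', par', pv', \<delta>')" and "U' \<subseteq> V"
      unfolding P_def gtree_def by (cases t) auto
    then show "(card \<circ> fst) t < Suc (card V)" using card_mono[OF finV \<open>U' \<subseteq> V\<close>] t by simp
  qed
  obtain t where Pt: "P t" and tmax: "\<forall>y. P y \<longrightarrow> (card \<circ> fst) y \<le> (card \<circ> fst) t"
    using Lattices_Big.ex_has_greatest_nat[OF P0 Pb] by blast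
  obtain U' par' pv' \<delta>' where t: "t = (U', par', pv', \<delta>')" by (cases t) auto
  have T': "gtree V E ends w \<beta> R r U' par' pv' \<delta>'" and UU': "U \<subseteq> U'"
    and new: "\<forall>x\<in>U'-U. \<delta>' x = Suc i" and agree: "\<forall>x\<in>U. par' x = par x \<and> pv' x = pv x \<and> \<delta>' x = \<delta> x"
    using Pt unfolding t P_def by auto
  have U'V: "U' \<subseteq> V" and rU': "r \<in> U'" and dr': "\<delta>' r = 0" and dR': "\<forall>x\<in>U'. \<delta>' x \<le> R"
    and str': "\<forall>x\<in>U'-{r}. par' x \<in> E \<and> pv' x \<in> U' \<and> ends (par' x) = {x, pv' x} \<and> \<delta>' x = Suc (\<delta>' (pv' x))"
    and good': "\<forall>x\<in>U'-{r}. \<forall>y\<in>U'-{r}. w (par' x) \<inter> w (par' y) \<noteq> {} \<longrightarrow> \<delta>' x \<le> \<delta>' y + \<beta>"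
    using T' unfolding gtree_def by blast+
  have finU': "finite U'" using U'V finV finite_subset by blast
  have dep': "\<forall>x\<in>U'. \<delta>' x \<le> Suc i"
  proof
    fix x assume "x \<in> U'"
    show "\<delta>' x \<le> Suc i"
    proof (cases "x \<in> U")
      case True then show ?thesis using Ti agree by (simp add: le_SucI)
    next
      case False then show ?thesis using new \<open>x \<in> U'\<close> by simp
    qed
  qed
  have comp: "gcomplete E ends w \<beta> r U' par' \<delta>' (Suc i)"
    unfolding gcomplete_def
  proof (intro ballI impI)
    fix x e assume xU': "x \<in> U'" and dx: "\<delta>' x < Suc i" and eE: "e \<in> E" and xe: "x \<in> ends e"
      and eF: "e \<notin> par' ` (U' - {r})" and eU: "\<not> ends e \<subseteq> U'"
    have xU: "x \<in> U" proof (rule ccontr) assume "x \<notin> U" thus False using xU' dx new by auto qed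
    have dxx: "\<delta>' x = \<delta> x" using agree xU by auto
    show "\<exists>y\<in>U'-{r}. \<delta>' y + \<beta> \<le> \<delta>' x \<and> w e \<inter> w (par' y) \<noteq> {}"
    proof (cases "\<delta> x < i")
      case True
      have "e \<notin> par ` (U - {r})"
      proof
        assume "e \<in> par ` (U - {r})"
        then obtain y where "y \<in> U - {r}" "e = par y" by auto
        hence "e = par' y" "y \<in> U' - {r}" using agree UU' by auto
        thus False using eF by auto
      qed
      moreover have "\<not> ends e \<subseteq> U" using eU UU' by auto
      ultimately obtain y where y: "y \<in> U - {r}" "\<delta> y + \<beta> \<le> \<delta> x" "w e \<inter> w (par y) \<noteq> {}"
        using Tc xU True eE xe unfolding gcomplete_def by blast
      then show ?thesis using agree UU' dxx by (intro bexI[of _ y]) auto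
    next
      case False
      hence dxi: "\<delta>' x = i" using dx dxx by simp
      show ?thesis
      proof (rule ccontr)
        assume nb: "\<not> (\<exists>y\<in>U'-{r}. \<delta>' y + \<beta> \<le> \<delta>' x \<and> w e \<inter> w (par' y) \<noteq> {})"
        obtain u where u: "u \<in> ends e" "u \<notin> U'" using eU by auto
        have xu: "x \<noteq> u" using u xU' by auto
        have ce: "card (ends e) = 2" "ends e \<subseteq> V" using H eE unfolding loopless_multigraph_def by auto
        have eux: "ends e = {u, x}" using card2_eq[OF ce(1) u(1) xe] xu by auto
        define U'' where "U'' = insert u U'"
        define par'' where "par'' = par'(u := e)"
        define pv'' where "pv'' = pv'(u := x)"
        define \<delta>'' where "\<delta>'' = \<delta>'(u := Suc i)"
        have ru: "r \<noteq> u" using rU' u by auto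
        have g1: "U'' \<subseteq> V" using U'V u ce unfolding U''_def by auto
        have g2: "r \<in> U''" using rU' unfolding U''_def by auto
        have g3: "\<delta>'' r = 0" using dr' ru unfolding \<delta>''_def by auto
        have g4: "\<forall>z\<in>U''. \<delta>'' z \<le> R" using dR' Suc.prems unfolding U''_def \<delta>''_def by auto
        have g5: "\<forall>z\<in>U''-{r}. par'' z \<in> E \<and> pv'' z \<in> U'' \<and> ends (par'' z) = {z, pv'' z} \<and> \<delta>'' z = Suc (\<delta>'' (pv'' z))"
        proof
          fix z assume z: "z \<in> U'' - {r}"
          show "par'' z \<in> E \<and> pv'' z \<in> U'' \<and> ends (par'' z) = {z, pv'' z} \<and> \<delta>'' z = Suc (\<delta>'' (pv'' z))"
          proof (cases "z = u")
            case True
            then show ?thesis using eE eux xU' xu dxi unfolding par''_def pv''_def U''_def \<delta>''_def by auto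
          next
            case False
            hence "z \<in> U' - {r}" using z unfolding U''_def by auto
            moreover have "pv' z \<noteq> u" using str' calculation u by auto
            ultimately show ?thesis using str' False unfolding par''_def pv''_def U''_def \<delta>''_def by auto
          qed
        qed
        have g6: "\<forall>z1\<in>U''-{r}. \<forall>z2\<in>U''-{r}. w (par'' z1) \<inter> w (par'' z2) \<noteq> {} \<longrightarrow> \<delta>'' z1 \<le> \<delta>'' z2 + \<beta>"
        proof (intro ballI impI)
          fix z1 z2 assume z1: "z1 \<in> U'' - {r}" and z2: "z2 \<in> U'' - {r}"
            and c: "w (par'' z1) \<inter> w (par'' z2) \<noteq> {}"
          show "\<delta>'' z1 \<le> \<delta>'' z2 + \<beta>"
          proof (cases "z1 = u")
            case True
            show ?thesis
            proof (cases "z2 = u")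
              case True then show ?thesis using \<open>z1 = u\<close> by simp
            next
              case False
              hence z2': "z2 \<in> U' - {r}" using z2 unfolding U''_def by auto
              have "w e \<inter> w (par' z2) \<noteq> {}" using c True False unfolding par''_def by auto
              hence "\<not> \<delta>' z2 + \<beta> \<le> \<delta>' x" using nb z2' by blast
              then show ?thesis using True False dxi unfolding \<delta>''_def by auto
            qed
          next
            case False
            hence z1': "z1 \<in> U' - {r}" using z1 unfolding U''_def by auto
            show ?thesis
            proof (cases "z2 = u")
              case True
              then show ?thesis using False dep' z1' unfolding \<delta>''_def by auto
            next
              case F2: False
              hence z2': "z2 \<in> U' - {r}" using z2 unfolding U''_def by auto
              show ?thesis using good' z1' z2' c False F2 unfolding par''_def \<delta>''_def by auto
            qed
          qed
        qed
        have "gtree V E ends w \<beta> R r U'' par'' pv'' \<delta>''"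
          unfolding gtree_def using g1 g2 g3 g4 g5 g6 by blast
        moreover have "U \<subseteq> U''" using UU' unfolding U''_def by auto
        moreover have "\<forall>z\<in>U''-U. \<delta>'' z = Suc i" using new unfolding U''_def \<delta>''_def by auto
        moreover have "\<forall>z\<in>U. par'' z = par z \<and> pv'' z = pv z \<and> \<delta>'' z = \<delta> z"
          using agree UU' u unfolding par''_def pv''_def \<delta>''_def by auto
        ultimately have "P (U'', par'', pv'', \<delta>'')" unfolding P_def by auto
        hence "card U'' \<le> card U'" using tmax t by fastforce
        moreover have "card U'' = Suc (card U')" using finU' u unfolding U''_def by simp
        ultimately show False by simp
      qed
    qed
  qed
  show ?case using T' dep' comp by blast
qed


locale gt =
  fixes V :: "'v set" and E :: "'e set" and ends :: "'e \<Rightarrow> 'v set" and w :: "'e \<Rightarrow> 'c set"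
    and \<beta> R :: nat and r :: 'v and U :: "'v set" and par :: "'v \<Rightarrow> 'e" and pv :: "'v \<Rightarrow> 'v"
    and \<delta> :: "'v \<Rightarrow> nat"
  assumes H: "loopless_multigraph V E ends" and T: "gtree V E ends w \<beta> R r U par pv \<delta>"
begin

lemma finV: "finite V" and finE: "finite E" using H unfolding loopless_multigraph_def by auto
lemma ends2: "e \<in> E \<Longrightarrow> card (ends e) = 2" and endsV: "e \<in> E \<Longrightarrow> ends e \<subseteq> V"
  using H unfolding loopless_multigraph_def by auto
lemma finends: "e \<in> E \<Longrightarrow> finite (ends e)" using ends2 by (metis card.infinite zero_neq_numeral)
lemma UV: "U \<subseteq> V" and rU: "r \<in> U" and dr: "\<delta> r = 0" and dR: "x \<in> U \<Longrightarrow> \<delta> x \<le> R"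
  using T unfolding gtree_def by auto
lemma finU: "finite U" using UV finV finite_subset by blast
lemma par_E: "x \<in> U \<Longrightarrow> x \<noteq> r \<Longrightarrow> par x \<in> E"
  and pv_U: "x \<in> U \<Longrightarrow> x \<noteq> r \<Longrightarrow> pv x \<in> U"
  and ends_par: "x \<in> U \<Longrightarrow> x \<noteq> r \<Longrightarrow> ends (par x) = {x, pv x}"
  and dpv: "x \<in> U \<Longrightarrow> x \<noteq> r \<Longrightarrow> \<delta> x = Suc (\<delta> (pv x))"
  using T unfolding gtree_def by blast+
lemma good: "x \<in> U \<Longrightarrow> x \<noteq> r \<Longrightarrow> y \<in> U \<Longrightarrow> y \<noteq> r \<Longrightarrow> w (par x) \<inter> w (par y) \<noteq> {} \<Longrightarrow> \<delta> x \<le> \<delta> y + \<beta>"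
  using T unfolding gtree_def by blast
lemma d0: "x \<in> U \<Longrightarrow> \<delta> x = 0 \<Longrightarrow> x = r" using dpv[of x] by (metis nat.distinct(1))
lemma pv_ne: "x \<in> U \<Longrightarrow> x \<noteq> r \<Longrightarrow> pv x \<noteq> x" using dpv[of x] by (metis n_not_Suc_n)
lemma par_inj: "x \<in> U \<Longrightarrow> x \<noteq> r \<Longrightarrow> y \<in> U \<Longrightarrow> y \<noteq> r \<Longrightarrow> par x = par y \<Longrightarrow> x = y"
proof (rule ccontr)
  assume a: "x \<in> U" "x \<noteq> r" "y \<in> U" "y \<noteq> r" "par x = par y" "x \<noteq> y"
  have "{x, pv x} = {y, pv y}" using ends_par a by metis
  hence "x = pv y" "y = pv x" using a(6) by (auto simp: doubleton_eq_iff)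
  hence "\<delta> x = Suc (\<delta> y)" "\<delta> y = Suc (\<delta> x)" using dpv[of x] dpv[of y] a by auto
  thus False by simp
qed

definition L where "L k = {x\<in>U. \<delta> x = k}"
lemma finL: "finite (L k)" unfolding L_def using finU by simp

lemma cardY: "card {y\<in>U. y \<noteq> r \<and> \<delta> y + \<beta> \<le> k} = (\<Sum>j<k-\<beta>. card (L (Suc j)))"
proof -
  have eq: "{y\<in>U. y \<noteq> r \<and> \<delta> y + \<beta> \<le> k} = (\<Union>j\<in>{..<k-\<beta>}. L (Suc j))"
  proof (intro equalityI subsetI)
    fix y assume y: "y \<in> {y\<in>U. y \<noteq> r \<and> \<delta> y + \<beta> \<le> k}"
    hence "\<delta> y = Suc (\<delta> (pv y))" using dpv[of y] by auto
    thus "y \<in> (\<Union>j\<in>{..<k-\<beta>}. L (Suc j))" using y unfolding L_def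
      by (intro UN_I[of "\<delta> (pv y)"]) auto
  next
    fix y assume "y \<in> (\<Union>j\<in>{..<k-\<beta>}. L (Suc j))"
    then obtain j where "j < k - \<beta>" "y \<in> U" "\<delta> y = Suc j" unfolding L_def by auto
    thus "y \<in> {y\<in>U. y \<noteq> r \<and> \<delta> y + \<beta> \<le> k}" using dr by auto
  qed
  show ?thesis unfolding eq
  proof (rule card_UN_disjoint)
    show "\<forall>i\<in>{..<k-\<beta>}. \<forall>j\<in>{..<k-\<beta>}. i \<noteq> j \<longrightarrow> L (Suc i) \<inter> L (Suc j) = {}"
      unfolding L_def by auto
  qed (simp, simp add: finL)
qed

lemma conflict_card:
  fixes \<gamma> :: real and \<Sigma> :: "'c set"
  assumes w_sub: "\<forall>e\<in>E. w e \<subseteq> \<Sigma>"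
    and w_card: "\<forall>e\<in>E. finite (w e) \<and> real (card (w e)) \<le> \<gamma>"
    and c_card: "\<forall>c\<in>\<Sigma>. finite {e\<in>E. c \<in> w e} \<and> real (card {e\<in>E. c \<in> w e}) \<le> \<gamma>"
    and f: "f \<in> E"
  shows "real (card {e\<in>E. w e \<inter> w f \<noteq> {}}) \<le> \<gamma>^2"
proof -
  have eq: "{e\<in>E. w e \<inter> w f \<noteq> {}} = (\<Union>c\<in>w f. {e\<in>E. c \<in> w e})" by auto
  have "card {e\<in>E. w e \<inter> w f \<noteq> {}} \<le> (\<Sum>c\<in>w f. card {e\<in>E. c \<in> w e})"
    unfolding eq using w_card f by (intro card_UN_le) auto
  hence "real (card {e\<in>E. w e \<inter> w f \<noteq> {}}) \<le> real (\<Sum>c\<in>w f. card {e\<in>E. c \<in> w e})"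
    by (simp only: of_nat_le_iff)
  also have "\<dots> = (\<Sum>c\<in>w f. real (card {e\<in>E. c \<in> w e}))" by simp
  also have "\<dots> \<le> (\<Sum>c\<in>w f. \<gamma>)" using c_card w_sub f by (intro sum_mono) auto
  also have "\<dots> = real (card (w f)) * \<gamma>" by simp
  also have "\<dots> \<le> \<gamma> * \<gamma>"
  proof -
    have cg: "real (card (w f)) \<le> \<gamma>" using w_card f by blast
    moreover have "0 \<le> real (card (w f))" by simp
    ultimately have "0 \<le> \<gamma>" by linarith
    thus ?thesis using mult_right_mono[OF cg] by simp
  qed
  finally show ?thesis unfolding power2_eq_square .
qed

end


context gt begin

lemma level_count:
  fixes \<gamma> :: real and \<Sigma> :: "'c set" and X0 :: "'v set"
  assumes comp: "gcomplete E ends w \<beta> r U par \<delta> R"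
    and mindeg: "\<forall>v\<in>V. mdegree E ends v \<ge> 3"
    and w_sub: "\<forall>e\<in>E. w e \<subseteq> \<Sigma>"
    and w_card: "\<forall>e\<in>E. finite (w e) \<and> real (card (w e)) \<le> \<gamma>"
    and c_card: "\<forall>c\<in>\<Sigma>. finite {e\<in>E. c \<in> w e} \<and> real (card {e\<in>E. c \<in> w e}) \<le> \<gamma>"
    and X0: "\<forall>v\<in>U. card {e\<in>E. e \<notin> par ` (U - {r}) \<and> ends e \<subseteq> U \<and> v \<in> ends e} \<le> (if v \<in> X0 then 1 else 0)"
    and k: "k < R"
  shows "2 * real (card (L k)) + (if k = 0 then 1 else 0)
     \<le> real (card (L (Suc k))) + real (card (L k \<inter> X0)) + \<gamma>^2 * real (\<Sum>j<k-\<beta>. card (L (Suc j)))"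
proof -
  define F where "F = par ` (U - {r})"
  define Ch where "Ch v = {x\<in>U. x \<noteq> r \<and> pv x = v}" for v
  define Bv where "Bv v = {e\<in>E. e \<notin> F \<and> \<not> ends e \<subseteq> U \<and> v \<in> ends e}" for v
  define Xv where "Xv v = {e\<in>E. e \<notin> F \<and> ends e \<subseteq> U \<and> v \<in> ends e}" for v
  define Y where "Y = {y\<in>U. y \<noteq> r \<and> \<delta> y + \<beta> \<le> k}"
  define Blk where "Blk = (\<Union>y\<in>Y. {e\<in>E. w e \<inter> w (par y) \<noteq> {}})"
  define I1 where "I1 v = (if v = r then 0 else 1::nat)" for v
  define I3 where "I3 v = (if v \<in> X0 then 1 else 0::nat)" for v
  have LU: "L k \<subseteq> U" unfolding L_def by auto
  have deg: "3 \<le> I1 v + card (Ch v) + I3 v + card (Bv v)" if v: "v \<in> L k" for v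
  proof -
    have vU: "v \<in> U" using v LU by auto
    hence vV: "v \<in> V" using UV by auto
    have d3: "3 \<le> card {e\<in>E. v \<in> ends e}" using mindeg vV unfolding mdegree_def by auto
    define A where "A = (if v = r then {} else {v}) \<union> Ch v"
    have sub: "{e\<in>E. v \<in> ends e} \<subseteq> (par ` A \<union> Xv v) \<union> Bv v"
    proof
      fix e assume e: "e \<in> {e\<in>E. v \<in> ends e}"
      show "e \<in> (par ` A \<union> Xv v) \<union> Bv v"
      proof (cases "e \<in> F")
        case True
        then obtain x where x: "x \<in> U" "x \<noteq> r" "e = par x" unfolding F_def by auto
        have "v \<in> {x, pv x}" using ends_par[OF x(1,2)] x(3) e by auto
        hence "v = x \<or> pv x = v" by auto
        hence "x \<in> A" using x unfolding A_def Ch_def by auto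
        thus ?thesis using x by auto
      next
        case False thus ?thesis using e unfolding Xv_def Bv_def by auto
      qed
    qed
    have finA: "finite A" unfolding A_def Ch_def using finU by auto
    have "card {e\<in>E. v \<in> ends e} \<le> card ((par ` A \<union> Xv v) \<union> Bv v)"
      by (rule card_mono[OF _ sub]) (use finA in \<open>auto simp: Xv_def Bv_def intro: finite_subset[OF _ finE]\<close>)
    also have "\<dots> \<le> card (par ` A \<union> Xv v) + card (Bv v)" by (rule card_Un_le)
    also have "\<dots> \<le> card (par ` A) + card (Xv v) + card (Bv v)" using card_Un_le by simp
    also have "card (par ` A) \<le> card A" by (rule card_image_le[OF finA])
    also have "card A \<le> card (if v = r then {} else {v}) + card (Ch v)" unfolding A_def by (rule card_Un_le)
    also have "card (if v = r then {} else {v}) = I1 v" unfolding I1_def by auto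
    also have "card (Xv v) \<le> I3 v" using X0 vU unfolding Xv_def F_def I3_def by auto
    finally show ?thesis using d3 by linarith
  qed
  have "(\<Sum>v\<in>L k. 3) \<le> (\<Sum>v\<in>L k. I1 v + card (Ch v) + I3 v + card (Bv v))"
    by (rule sum_mono) (rule deg)
  hence main: "3 * card (L k) \<le> sum I1 (L k) + (\<Sum>v\<in>L k. card (Ch v)) + sum I3 (L k) + (\<Sum>v\<in>L k. card (Bv v))"
    by (simp add: sum.distrib)
  have S1: "sum I1 (L k) + (if k = 0 then 1 else 0) \<le> card (L k)"
  proof (cases "k = 0")
    case True
    have "L k = {r}" unfolding L_def using True rU dr d0 by blast
    thus ?thesis using True unfolding I1_def by simp
  next
    case False
    have "sum I1 (L k) = (\<Sum>v\<in>L k. 1)" unfolding I1_def L_def using dr False by (intro sum.cong) auto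
    thus ?thesis using False by simp
  qed
  have S2: "(\<Sum>v\<in>L k. card (Ch v)) \<le> card (L (Suc k))"
  proof -
    have "(\<Sum>v\<in>L k. card (Ch v)) = card (\<Union>v\<in>L k. Ch v)"
      by (rule card_UN_disjoint[symmetric]) (simp add: finL, simp add: Ch_def finU, auto simp: Ch_def)
    also have "\<dots> \<le> card (L (Suc k))"
    proof (rule card_mono[OF finL])
      show "(\<Union>v\<in>L k. Ch v) \<subseteq> L (Suc k)"
      proof
        fix x assume "x \<in> (\<Union>v\<in>L k. Ch v)"
        then obtain v where v: "v \<in> L k" "x \<in> U" "x \<noteq> r" "pv x = v" unfolding Ch_def by auto
        have "\<delta> x = Suc (\<delta> (pv x))" using dpv[OF v(2,3)] .
        thus "x \<in> L (Suc k)" using v unfolding L_def by auto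
      qed
    qed
    finally show ?thesis .
  qed
  have S3: "sum I3 (L k) = card (L k \<inter> X0)"
  proof -
    have "card {v\<in>L k. v \<in> X0} = (\<Sum>v\<in>{v\<in>L k. v \<in> X0}. (1::nat))" by simp
    also have "\<dots> = (\<Sum>v\<in>L k. if v \<in> X0 then 1 else 0)" by (rule sum.inter_filter[OF finL])
    finally show ?thesis unfolding I3_def by (simp add: Int_def)
  qed
  have S4: "(\<Sum>v\<in>L k. card (Bv v)) \<le> card Blk"
  proof -
    have disj: "\<forall>v\<in>L k. \<forall>v'\<in>L k. v \<noteq> v' \<longrightarrow> Bv v \<inter> Bv v' = {}"
    proof (intro ballI impI)
      fix v v' assume vv: "v \<in> L k" "v' \<in> L k" "v \<noteq> v'"
      show "Bv v \<inter> Bv v' = {}"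
      proof (rule ccontr)
        assume "Bv v \<inter> Bv v' \<noteq> {}"
        then obtain e where e: "e \<in> E" "v \<in> ends e" "v' \<in> ends e" "\<not> ends e \<subseteq> U" unfolding Bv_def by auto
        have "ends e = {v, v'}" using card2_eq[OF ends2[OF e(1)] e(2,3) vv(3)] .
        thus False using e(4) vv LU by auto
      qed
    qed
    have "(\<Sum>v\<in>L k. card (Bv v)) = card (\<Union>v\<in>L k. Bv v)"
      by (rule card_UN_disjoint[symmetric]) (simp add: finL, simp add: Bv_def finE, rule disj)
    also have "\<dots> \<le> card Blk"
    proof (rule card_mono)
      show "finite Blk" by (rule finite_subset[OF _ finE]) (auto simp: Blk_def)
      show "(\<Union>v\<in>L k. Bv v) \<subseteq> Blk"
      proof
        fix e assume "e \<in> (\<Union>v\<in>L k. Bv v)"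
        then obtain v where v: "v \<in> L k" "e \<in> E" "e \<notin> F" "\<not> ends e \<subseteq> U" "v \<in> ends e" unfolding Bv_def by auto
        have vU: "v \<in> U" "\<delta> v = k" using v(1) unfolding L_def by auto
        obtain y where y: "y \<in> U - {r}" "\<delta> y + \<beta> \<le> \<delta> v" "w e \<inter> w (par y) \<noteq> {}"
          using comp vU k v unfolding gcomplete_def F_def by blast
        have yY: "y \<in> Y" unfolding Y_def using y vU by auto
        show "e \<in> Blk" unfolding Blk_def using yY y(3) v(2) by blast
      qed
    qed
    finally show ?thesis .
  qed
  have S5: "real (card Blk) \<le> \<gamma>^2 * real (card Y)"
  proof -
    have finY: "finite Y" unfolding Y_def using finU by auto
    have "card Blk \<le> (\<Sum>y\<in>Y. card {e\<in>E. w e \<inter> w (par y) \<noteq> {}})"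
      unfolding Blk_def by (rule card_UN_le[OF finY])
    hence "real (card Blk) \<le> real (\<Sum>y\<in>Y. card {e\<in>E. w e \<inter> w (par y) \<noteq> {}})" by (simp only: of_nat_le_iff)
    also have "\<dots> = (\<Sum>y\<in>Y. real (card {e\<in>E. w e \<inter> w (par y) \<noteq> {}}))" by simp
    also have "\<dots> \<le> (\<Sum>y\<in>Y. \<gamma>^2)"
    proof (rule sum_mono)
      fix y assume "y \<in> Y"
      hence "par y \<in> E" using par_E unfolding Y_def by auto
      thus "real (card {e\<in>E. w e \<inter> w (par y) \<noteq> {}}) \<le> \<gamma>^2"
        by (rule conflict_card[OF w_sub w_card c_card])
    qed
    also have "\<dots> = \<gamma>^2 * real (card Y)" by simp
    finally show ?thesis .
  qed
  have cY: "card Y = (\<Sum>j<k-\<beta>. card (L (Suc j)))" unfolding Y_def by (rule cardY)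
  have "real (3 * card (L k)) \<le> real (sum I1 (L k) + (\<Sum>v\<in>L k. card (Ch v)) + sum I3 (L k) + (\<Sum>v\<in>L k. card (Bv v)))"
    using main by (simp only: of_nat_le_iff)
  hence m2: "3 * real (card (L k)) \<le> real (sum I1 (L k)) + real (\<Sum>v\<in>L k. card (Ch v)) + real (sum I3 (L k)) + real (\<Sum>v\<in>L k. card (Bv v))"
    by simp
  have "real (sum I1 (L k)) + (if k = 0 then 1 else 0) \<le> real (card (L k))"
  proof -
    have "\<And>s::nat. s + (if k=0 then 1 else 0) \<le> card (L k) \<Longrightarrow> real s + (if k = 0 then 1 else 0) \<le> real (card (L k))"
      by (cases "k=0") auto
    thus ?thesis using S1 by blast
  qed
  moreover have "real (\<Sum>v\<in>L k. card (Ch v)) \<le> real (card (L (Suc k)))" using S2 by (simp only: of_nat_le_iff)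
  moreover have "real (\<Sum>v\<in>L k. card (Bv v)) \<le> \<gamma>^2 * real (\<Sum>j<k-\<beta>. card (L (Suc j)))"
    using S4 S5 cY by (metis of_nat_le_iff order_trans)
  ultimately show ?thesis using m2 S3 by linarith
qed

end


lemma mwalk_Nil: "mwalk E ends [v] []" unfolding mwalk_def by simp

lemma mwalk_ConsI: "mwalk E ends vs es \<Longrightarrow> e \<in> E \<Longrightarrow> ends e = {v, hd vs} \<Longrightarrow> mwalk E ends (v # vs) (e # es)"
proof -
  assume a: "mwalk E ends vs es" "e \<in> E" "ends e = {v, hd vs}"
  hence l: "length vs = Suc (length es)" and s: "set es \<subseteq> E"
    and n: "\<forall>i<length es. ends (es ! i) = {vs ! i, vs ! Suc i}" unfolding mwalk_def by auto
  have ne: "vs \<noteq> []" using l by auto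
  have "\<forall>i<Suc (length es). ends ((e#es) ! i) = {(v#vs) ! i, (v#vs) ! Suc i}"
  proof (intro allI impI)
    fix i assume i: "i < Suc (length es)"
    show "ends ((e#es) ! i) = {(v#vs) ! i, (v#vs) ! Suc i}"
    proof (cases i)
      case 0 then show ?thesis using a(3) ne by (simp add: hd_conv_nth)
    next
      case (Suc j) then show ?thesis using n i by simp
    qed
  qed
  thus ?thesis using l s a(2) unfolding mwalk_def by simp
qed

lemma mwalk_ConsD: "mwalk E ends (v # vs) (e # es) \<Longrightarrow> e \<in> E \<and> ends e = {v, hd vs} \<and> mwalk E ends vs es \<and> vs \<noteq> []"
proof -
  assume a: "mwalk E ends (v # vs) (e # es)"
  hence l: "length vs = Suc (length es)" and s: "set (e#es) \<subseteq> E"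
    and n: "\<forall>i<Suc (length es). ends ((e#es) ! i) = {(v#vs) ! i, (v#vs) ! Suc i}"
    unfolding mwalk_def by auto
  have "vs \<noteq> []" using l by auto
  moreover have "ends e = {v, hd vs}" using n[rule_format, of 0] \<open>vs \<noteq> []\<close> by (simp add: hd_conv_nth)
  moreover have "\<forall>i<length es. ends (es ! i) = {vs ! i, vs ! Suc i}"
  proof (intro allI impI)
    fix i assume "i < length es"
    hence "Suc i < Suc (length es)" by simp
    from n[rule_format, OF this] show "ends (es ! i) = {vs ! i, vs ! Suc i}" by simp
  qed
  ultimately show ?thesis using l s unfolding mwalk_def by auto
qed

lemma mwalk_nonempty: "mwalk E ends vs es \<Longrightarrow> vs \<noteq> []" unfolding mwalk_def by auto

lemma mwalk_append:
  "mwalk E ends vs1 es1 \<Longrightarrow> mwalk E ends vs2 es2 \<Longrightarrow> last vs1 = hd vs2 \<Longrightarrow>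
    mwalk E ends (vs1 @ tl vs2) (es1 @ es2) \<and> hd (vs1 @ tl vs2) = hd vs1 \<and> last (vs1 @ tl vs2) = last vs2"
proof (induction es1 arbitrary: vs1)
  case Nil
  then obtain v where "vs1 = [v]" unfolding mwalk_def by (cases vs1) auto
  moreover have "vs2 \<noteq> []" using Nil mwalk_nonempty by auto
  ultimately show ?case using Nil by (cases vs2) auto
next
  case (Cons e es1)
  obtain v vs1' where v: "vs1 = v # vs1'" using mwalk_nonempty[OF Cons.prems(1)] by (cases vs1) auto
  have d: "e \<in> E" "ends e = {v, hd vs1'}" "mwalk E ends vs1' es1" "vs1' \<noteq> []"
    using mwalk_ConsD[OF Cons.prems(1)[unfolded v]] by simp_all
  have IH: "mwalk E ends (vs1' @ tl vs2) (es1 @ es2) \<and> hd (vs1' @ tl vs2) = hd vs1' \<and> last (vs1' @ tl vs2) = last vs2"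
    using Cons.IH[OF d(3) Cons.prems(2)] Cons.prems(3) v d(4) by simp
  have "mwalk E ends (v # (vs1' @ tl vs2)) (e # (es1 @ es2))"
    using mwalk_ConsI[OF IH[THEN conjunct1] d(1)] d(2) IH by simp
  thus ?case using v IH d(4) by simp
qed

lemma mwalk_edge: "e \<in> E \<Longrightarrow> ends e = {a, b} \<Longrightarrow> mwalk E ends [a, b] [e]"
  using mwalk_ConsI[OF mwalk_Nil[of E ends b]] by simp


context gt begin
lemma chain: "x \<in> U \<Longrightarrow> k \<le> \<delta> x \<Longrightarrow> (pv^^k) x \<in> U \<and> \<delta> ((pv^^k) x) = \<delta> x - k"
proof (induction k)
  case 0 then show ?case by simp
next
  case (Suc k)
  define y where "y = (pv^^k) x"
  have y: "y \<in> U" "\<delta> y = \<delta> x - k" using Suc unfolding y_def by auto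
  have "y \<noteq> r" using y Suc.prems dr by auto
  hence "pv y \<in> U" "\<delta> y = Suc (\<delta> (pv y))" using pv_U dpv y by auto
  moreover have "(pv^^Suc k) x = pv y" unfolding y_def by simp
  ultimately show ?case using y Suc.prems by simp
qed
end

locale gt2 = gt +
  fixes P and c
  assumes PU: "P \<subseteq> U" and Pne: "P \<noteq> {}" and finP: "finite P"
    and c_anc: "\<forall>x\<in>P. \<exists>k\<le>\<delta> x. (pv^^k) x = c"
    and c_max: "\<And>d. \<forall>x\<in>P. \<exists>k\<le>\<delta> x. (pv^^k) x = d \<Longrightarrow> \<delta> d \<le> \<delta> c"
begin

definition h where "h x = \<delta> x - \<delta> c"
definition V0 where "V0 = {y. \<exists>x\<in>P. \<exists>k\<le>h x. y = (pv^^k) x}"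
definition E0 where "E0 = par ` (V0 - {c})"

lemma hc: "x \<in> P \<Longrightarrow> (pv^^(h x)) x = c \<and> h x \<le> \<delta> x \<and> \<delta> c \<le> \<delta> x \<and> \<delta> c = \<delta> x - h x"
proof -
  assume x: "x \<in> P"
  then obtain k where k: "k \<le> \<delta> x" "(pv^^k) x = c" using c_anc by blast
  have "\<delta> c = \<delta> x - k" using chain[of x k] k x PU by auto
  hence "k = h x" unfolding h_def using k by simp
  thus ?thesis using k \<open>\<delta> c = \<delta> x - k\<close> by simp
qed

lemma cU: "c \<in> U"
proof -
  obtain x where "x \<in> P" using Pne by auto
  thus ?thesis using hc[of x] chain[of x "h x"] PU by auto
qed

lemma pk: "x \<in> P \<Longrightarrow> k \<le> h x \<Longrightarrow> (pv^^k) x \<in> V0 \<and> (pv^^k) x \<in> U \<and> \<delta> ((pv^^k) x) = \<delta> x - k"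
proof -
  assume a: "x \<in> P" "k \<le> h x"
  hence "k \<le> \<delta> x" using hc by fastforce
  thus ?thesis using chain[of x k] a PU unfolding V0_def by auto
qed

lemma V0U: "V0 \<subseteq> U" unfolding V0_def using pk by blast
lemma cV0: "c \<in> V0"
proof -
  obtain x where "x \<in> P" using Pne by auto
  thus ?thesis using hc[of x] unfolding V0_def by (metis (mono_tags, lifting) mem_Collect_eq order_refl)
qed
lemma PV0: "P \<subseteq> V0" unfolding V0_def by (force intro: exI[of _ 0])
lemma finV0: "finite V0" using V0U finU finite_subset by blast

lemma V0_dep: "y \<in> V0 \<Longrightarrow> \<delta> c \<le> \<delta> y \<and> (\<delta> y = \<delta> c \<longrightarrow> y = c)"
proof -
  assume "y \<in> V0"
  then obtain x k where xk: "x \<in> P" "k \<le> h x" "y = (pv^^k) x" unfolding V0_def by auto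
  have d: "\<delta> y = \<delta> x - k" using pk xk by auto
  have hx: "(pv^^(h x)) x = c" "h x \<le> \<delta> x" "\<delta> c = \<delta> x - h x" using hc xk(1) by auto
  show ?thesis
  proof
    show "\<delta> c \<le> \<delta> y" using d hx xk by simp
    show "\<delta> y = \<delta> c \<longrightarrow> y = c"
    proof
      assume "\<delta> y = \<delta> c"
      hence "k = h x" using d hx xk by simp
      thus "y = c" using xk hx by simp
    qed
  qed
qed

lemma V0_up: "y \<in> V0 \<Longrightarrow> y \<noteq> c \<Longrightarrow> y \<in> U \<and> y \<noteq> r \<and> pv y \<in> V0 \<and> \<delta> y = Suc (\<delta> (pv y))"
proof -
  assume y: "y \<in> V0" "y \<noteq> c"
  then obtain x k where xk: "x \<in> P" "k \<le> h x" "y = (pv^^k) x" unfolding V0_def by auto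
  have "k \<noteq> h x" using xk hc y(2) by auto
  hence "Suc k \<le> h x" using xk by simp
  hence "(pv^^(Suc k)) x \<in> V0" using pk xk by blast
  hence pvy: "pv y \<in> V0" using xk by simp
  have yU: "y \<in> U" using y V0U by auto
  have "\<delta> c < \<delta> y" using V0_dep[OF y(1)] y(2) by auto
  hence "y \<noteq> r" using dr by auto
  thus ?thesis using pvy yU dpv by auto
qed

lemma E0E: "E0 \<subseteq> E" unfolding E0_def using V0_up par_E by auto
lemma E0_cases: "e \<in> E0 \<Longrightarrow> \<exists>y. y \<in> V0 \<and> y \<noteq> c \<and> e = par y" unfolding E0_def by auto
lemma E0_ends: "y \<in> V0 \<Longrightarrow> y \<noteq> c \<Longrightarrow> ends (par y) = {y, pv y}" using V0_up ends_par by auto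
lemma E0_sub: "e \<in> E0 \<Longrightarrow> ends e \<subseteq> V0" using E0_cases E0_ends V0_up by fastforce
lemma finE0: "finite E0" unfolding E0_def using finV0 by auto

lemma up_walk: "y \<in> V0 \<Longrightarrow> \<exists>vs es. mwalk E0 ends vs es \<and> hd vs = y \<and> last vs = c \<and> length es = \<delta> y - \<delta> c"
proof (induction "\<delta> y - \<delta> c" arbitrary: y)
  case 0
  hence "y = c" using V0_dep[OF 0(2)] by simp
  thus ?case using mwalk_Nil[of E0 ends c] 0 by force
next
  case (Suc n)
  have yc: "y \<noteq> c" using Suc by auto
  have u: "y \<in> U" "y \<noteq> r" "pv y \<in> V0" "\<delta> y = Suc (\<delta> (pv y))" using V0_up[OF Suc.prems yc] by auto
  have "n = \<delta> (pv y) - \<delta> c" using Suc(2) u(4) V0_dep[OF u(3)] by simp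
  then obtain vs es where w: "mwalk E0 ends vs es" "hd vs = pv y" "last vs = c" "length es = n"
    using Suc.hyps(1) u(3) by blast
  have pe: "par y \<in> E0" unfolding E0_def using Suc.prems yc by auto
  have "mwalk E0 ends (y # vs) (par y # es)"
    using mwalk_ConsI[OF w(1) pe] E0_ends[OF Suc.prems yc] w(2) by simp
  moreover have "vs \<noteq> []" using mwalk_nonempty[OF w(1)] .
  ultimately show ?case using w Suc(2) by (intro exI[of _ "y # vs"] exI[of _ "par y # es"]) simp
qed

lemma down_walk: "y \<in> V0 \<Longrightarrow> \<exists>vs es. mwalk E0 ends vs es \<and> hd vs = c \<and> last vs = y \<and> length es = \<delta> y - \<delta> c"
proof (induction "\<delta> y - \<delta> c" arbitrary: y)
  case 0
  hence "y = c" using V0_dep[OF 0(2)] by simp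
  thus ?case using mwalk_Nil[of E0 ends c] 0 by force
next
  case (Suc n)
  have yc: "y \<noteq> c" using Suc by auto
  have u: "y \<in> U" "y \<noteq> r" "pv y \<in> V0" "\<delta> y = Suc (\<delta> (pv y))" using V0_up[OF Suc.prems yc] by auto
  have "n = \<delta> (pv y) - \<delta> c" using Suc(2) u(4) V0_dep[OF u(3)] by simp
  then obtain vs es where w: "mwalk E0 ends vs es" "hd vs = c" "last vs = pv y" "length es = n"
    using Suc.hyps(1) u(3) by blast
  have pe: "par y \<in> E0" unfolding E0_def using Suc.prems yc by auto
  have ed: "mwalk E0 ends [pv y, y] [par y]"
  proof -
    have "ends (par y) = {pv y, y}" using E0_ends[OF Suc.prems yc] by auto
    thus ?thesis by (rule mwalk_edge[OF pe])
  qed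
  have a: "mwalk E0 ends (vs @ [y]) (es @ [par y]) \<and> hd (vs @ [y]) = hd vs \<and> last (vs @ [y]) = y"
    using mwalk_append[OF w(1) ed] w(3) by simp
  show ?case using a w Suc(2) by (intro exI[of _ "vs @ [y]"] exI[of _ "es @ [par y]"]) simp
qed

lemma E0_dd: "e \<in> E0 \<Longrightarrow> ends e = {a, b} \<Longrightarrow> \<delta> a = Suc (\<delta> b) \<or> \<delta> b = Suc (\<delta> a)"
proof -
  assume e: "e \<in> E0" "ends e = {a, b}"
  then obtain y where y: "y \<in> V0" "y \<noteq> c" "e = par y" using E0_cases by blast
  have "{y, pv y} = {a, b}" using E0_ends[OF y(1,2)] y(3) e(2) by simp
  moreover have "\<delta> y = Suc (\<delta> (pv y))" using V0_up[OF y(1,2)] by simp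
  ultimately show ?thesis by (auto simp: doubleton_eq_iff)
qed

lemma dist_lb: "mwalk E0 ends vs es \<Longrightarrow> \<delta> (last vs) \<le> \<delta> (hd vs) + length es \<and> \<delta> (hd vs) \<le> \<delta> (last vs) + length es"
proof (induction es arbitrary: vs)
  case Nil
  then obtain v where "vs = [v]" unfolding mwalk_def by (cases vs) auto
  thus ?case by simp
next
  case (Cons e es)
  obtain v vs' where v: "vs = v # vs'" using mwalk_nonempty[OF Cons.prems] by (cases vs) auto
  have d: "e \<in> E0" "ends e = {v, hd vs'}" "mwalk E0 ends vs' es" "vs' \<noteq> []"
    using mwalk_ConsD[OF Cons.prems[unfolded v]] by simp_all
  have IH: "\<delta> (last vs') \<le> \<delta> (hd vs') + length es \<and> \<delta> (hd vs') \<le> \<delta> (last vs') + length es"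
    using Cons.IH[OF d(3)] .
  have "\<delta> v = Suc (\<delta> (hd vs')) \<or> \<delta> (hd vs') = Suc (\<delta> v)" using E0_dd[OF d(1,2)] .
  thus ?case using IH v d(4) by auto
qed

lemma mdist_eq: "y \<in> V0 \<Longrightarrow> mdist E0 ends c y = \<delta> y - \<delta> c"
  unfolding mdist_def
proof (rule Least_equality)
  assume y: "y \<in> V0"
  show "\<exists>vs es. mwalk E0 ends vs es \<and> hd vs = c \<and> last vs = y \<and> length es = \<delta> y - \<delta> c"
    using down_walk[OF y] .
  fix k assume "\<exists>vs es. mwalk E0 ends vs es \<and> hd vs = c \<and> last vs = y \<and> length es = k"
  then obtain vs es where "mwalk E0 ends vs es" "hd vs = c" "last vs = y" "length es = k" by blast
  thus "\<delta> y - \<delta> c \<le> k" using dist_lb by fastforce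
qed

lemma mdist_edge_eq: "y \<in> V0 \<Longrightarrow> y \<noteq> c \<Longrightarrow> mdist_edge E0 ends c (par y) = \<delta> (pv y) - \<delta> c"
proof -
  assume y: "y \<in> V0" "y \<noteq> c"
  have u: "pv y \<in> V0" "\<delta> y = Suc (\<delta> (pv y))" using V0_up[OF y] by auto
  have "\<delta> c \<le> \<delta> (pv y)" using V0_dep[OF u(1)] by simp
  hence "(\<lambda>x. mdist E0 ends c x) ` ends (par y) = {\<delta> y - \<delta> c, \<delta> (pv y) - \<delta> c}"
    using E0_ends[OF y] mdist_eq[OF y(1)] mdist_eq[OF u(1)] by simp
  moreover have "Min {\<delta> y - \<delta> c, \<delta> (pv y) - \<delta> c} = \<delta> (pv y) - \<delta> c"
    using u(2) \<open>\<delta> c \<le> \<delta> (pv y)\<close> by simp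
  ultimately show ?thesis unfolding mdist_edge_def by simp
qed

lemma conn: "mconnected V0 E0 ends"
  unfolding mconnected_def
proof (intro ballI)
  fix u v assume u: "u \<in> V0" and v: "v \<in> V0"
  obtain vs1 es1 where w1: "mwalk E0 ends vs1 es1" "hd vs1 = u" "last vs1 = c" using up_walk[OF u] by blast
  obtain vs2 es2 where w2: "mwalk E0 ends vs2 es2" "hd vs2 = c" "last vs2 = v" using down_walk[OF v] by blast
  show "\<exists>vs es. mwalk E0 ends vs es \<and> hd vs = u \<and> last vs = v"
    using mwalk_append[OF w1(1) w2(1)] w1 w2 by metis
qed

end


lemma two_le_card: "e1 \<in> S \<Longrightarrow> e2 \<in> S \<Longrightarrow> e1 \<noteq> e2 \<Longrightarrow> finite S \<Longrightarrow> 2 \<le> card S"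
proof -
  assume a: "e1 \<in> S" "e2 \<in> S" "e1 \<noteq> e2" "finite S"
  have "card {e1, e2} \<le> card S" using a by (intro card_mono) auto
  thus ?thesis using a(3) by simp
qed

context gt2 begin

lemma acyc: "\<not> has_mcycle E0 ends"
proof
  assume "has_mcycle E0 ends"
  then obtain vs es where c: "length es \<ge> 1" "length vs = length es" "distinct vs" "distinct es" "set es \<subseteq> E0"
    "\<forall>i<length es. ends (es!i) = {vs!i, vs!(Suc i mod length es)}" unfolding has_mcycle_def by blast
  define n where "n = length es"
  have n0: "0 < n" using c(1) unfolding n_def by linarith
  have esE0: "\<And>i. i < n \<Longrightarrow> es!i \<in> E0" using c(5) unfolding n_def by (meson nth_mem subsetD)
  have ends_i: "\<And>i. i < n \<Longrightarrow> ends (es!i) = {vs!i, vs!(Suc i mod n)}" using c(6) unfolding n_def by blast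
  have vsV0: "\<And>i. i < n \<Longrightarrow> vs!i \<in> V0"
  proof -
    fix i assume i: "i < n"
    have "vs!i \<in> ends (es!i)" using ends_i[OF i] by simp
    thus "vs!i \<in> V0" using E0_sub[OF esE0[OF i]] by auto
  qed
  have "\<forall>y. y < n \<longrightarrow> \<delta> (vs!y) < Suc R"
    using vsV0 V0U dR by (meson le_imp_less_Suc subsetD)
  then obtain i0 where i0: "i0 < n" "\<forall>j. j < n \<longrightarrow> \<delta> (vs!j) \<le> \<delta> (vs!i0)"
    using Lattices_Big.ex_has_greatest_nat[of "\<lambda>i. i < n" 0 "\<lambda>i. \<delta> (vs!i)" "Suc R"] n0 by blast
  have key: "es!j = par (vs!i0)" if j: "j < n" "vs!i0 \<in> ends (es!j)" for j
  proof -
    obtain y where y: "y \<in> V0" "y \<noteq> c" "es!j = par y" using E0_cases[OF esE0[OF j(1)]] by blast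
    have ey: "ends (es!j) = {y, pv y}" using E0_ends[OF y(1,2)] y(3) by simp
    show ?thesis
    proof (cases "vs!i0 = y")
      case True then show ?thesis using y by simp
    next
      case False
      hence pvy: "vs!i0 = pv y" using j(2) ey by auto
      have "y \<in> {vs!j, vs!(Suc j mod n)}" using ey ends_i[OF j(1)] by auto
      moreover have "Suc j mod n < n" using n0 by simp
      ultimately obtain m where m: "m < n" "y = vs!m" using j(1) by blast
      have "\<delta> y = Suc (\<delta> (pv y))" using V0_up[OF y(1,2)] by simp
      thus ?thesis using i0(2) m pvy by fastforce
    qed
  qed
  define j where "j = (if i0 = 0 then n - 1 else i0 - 1)"
  have j: "j < n" "Suc j mod n = i0" unfolding j_def using i0(1) n0 by auto
  have "vs!i0 \<in> ends (es!j)" using ends_i[OF j(1)] j(2) by simp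
  hence e1: "es!j = par (vs!i0)" using key j(1) by blast
  have "vs!i0 \<in> ends (es!i0)" using ends_i[OF i0(1)] by simp
  hence e2: "es!i0 = par (vs!i0)" using key i0(1) by blast
  have "j = i0" using nth_eq_iff_index_eq[OF c(4), of j i0] e1 e2 j(1) i0(1) unfolding n_def by simp
  hence n1: "n = 1" using j_def i0(1) by (cases "i0 = 0") auto
  have "ends (es!0) = {vs!0}" using ends_i[of 0] n1 by simp
  moreover have "card (ends (es!0)) = 2" using ends2 E0E esE0[of 0] n0 by blast
  ultimately show False by simp
qed

lemma deg2: "v \<in> V0 \<Longrightarrow> v \<notin> P \<Longrightarrow> 2 \<le> mdegree E0 ends v"
proof -
  assume v: "v \<in> V0" "v \<notin> P"
  define S where "S = {e\<in>E0. v \<in> ends e}"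
  have finS: "finite S" unfolding S_def using finE0 by simp
  have parS: "par z \<in> S" if z: "z \<in> V0" "z \<noteq> c" "pv z = v" for z
    unfolding S_def E0_def using z E0_ends[OF z(1,2)] by auto
  have inj: "par z1 \<noteq> par z2" if "z1 \<in> V0" "z1 \<noteq> c" "z2 \<in> V0" "z2 \<noteq> c" "z1 \<noteq> z2" for z1 z2
    using par_inj V0_up that by blast
  obtain x k where xk: "x \<in> P" "k \<le> h x" "v = (pv^^k) x" using v(1) unfolding V0_def by auto
  have k0: "k \<noteq> 0" using xk v(2) by (cases k) auto
  have hx: "(pv^^(h x)) x = c" "h x \<le> \<delta> x" "\<delta> c = \<delta> x - h x" using hc[OF xk(1)] by blast+
  show ?thesis
  proof (cases "v = c")
    case False
    define z where "z = (pv^^(k-1)) x"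
    have z: "z \<in> V0" "z \<in> U" "\<delta> z = \<delta> x - (k-1)" using pk[OF xk(1), of "k-1"] xk(2) unfolding z_def by auto
    have sk: "Suc (k-1) = k" using k0 by simp
    have "pv z = (pv^^(Suc (k-1))) x" unfolding z_def by simp
    hence pvz: "pv z = v" using sk xk(3) by simp
    have dv: "\<delta> v = \<delta> x - k" using pk[OF xk(1,2)] xk(3) by simp
    have "\<delta> c \<le> \<delta> v" using V0_dep[OF v(1)] by simp
    hence dz: "\<delta> v < \<delta> z" using z(3) dv k0 xk(2) hx by linarith
    hence zc: "z \<noteq> c" using \<open>\<delta> c \<le> \<delta> v\<close> by auto
    have "par v \<in> S" unfolding S_def E0_def using v(1) False E0_ends[OF v(1) False] by auto
    moreover have "par z \<in> S" using parS z(1) zc pvz by blast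
    moreover have "v \<noteq> z" using dz by auto
    hence "par v \<noteq> par z" by (rule inj[OF v(1) False z(1) zc])
    ultimately have "2 \<le> card S" using finS by (intro two_le_card)
    thus ?thesis unfolding mdegree_def S_def .
  next
    case True
    define ch where "ch x = (pv^^(h x - 1)) x" for x
    have h1: "1 \<le> h y" if "y \<in> P" for y
    proof (rule ccontr)
      assume "\<not> 1 \<le> h y"
      hence "h y = 0" by simp
      hence "y = c" using hc[OF that] by simp
      thus False using that v(2) True by simp
    qed
    have chp: "ch y \<in> V0 \<and> ch y \<noteq> c \<and> pv (ch y) = c" if y: "y \<in> P" for y
    proof -
      have a: "ch y \<in> V0" "\<delta> (ch y) = \<delta> y - (h y - 1)" using pk[OF y, of "h y - 1"] unfolding ch_def by auto
      have hy: "(pv^^(h y)) y = c" "h y \<le> \<delta> y" "\<delta> c = \<delta> y - h y" using hc[OF y] by blast+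
      have "\<delta> (ch y) = Suc (\<delta> c)" using a(2) hy(2,3) h1[OF y] by linarith
      moreover have "pv (ch y) = c"
      proof -
        have sk: "Suc (h y - 1) = h y" using h1[OF y] by simp
        have "pv (ch y) = (pv^^(Suc (h y - 1))) y" unfolding ch_def by simp
        thus ?thesis using sk hy(1) by simp
      qed
      moreover have "ch y \<noteq> c" using \<open>\<delta> (ch y) = Suc (\<delta> c)\<close> by (metis n_not_Suc_n)
      ultimately show ?thesis using a(1) by blast
    qed
    have "\<exists>x1\<in>P. \<exists>x2\<in>P. ch x1 \<noteq> ch x2"
    proof (rule ccontr)
      assume "\<not> (\<exists>x1\<in>P. \<exists>x2\<in>P. ch x1 \<noteq> ch x2)"
      hence all: "\<forall>x1\<in>P. \<forall>x2\<in>P. ch x1 = ch x2" by blast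
      have "\<forall>y\<in>P. \<exists>k\<le>\<delta> y. (pv^^k) y = ch x"
      proof
        fix y assume y: "y \<in> P"
        have "h y \<le> \<delta> y" using hc[OF y] by blast
        hence "h y - 1 \<le> \<delta> y" by linarith
        moreover have "ch y = ch x" using all y xk(1) by blast
        hence "(pv^^(h y - 1)) y = ch x" unfolding ch_def by simp
        ultimately show "\<exists>k\<le>\<delta> y. (pv^^k) y = ch x" by blast
      qed
      hence "\<delta> (ch x) \<le> \<delta> c" by (rule c_max)
      moreover have "\<delta> (ch x) = \<delta> x - (h x - 1)" using pk[OF xk(1), of "h x - 1"] unfolding ch_def by auto
      ultimately show False using hx h1[OF xk(1)] by linarith
    qed
    then obtain x1 x2 where x12: "x1 \<in> P" "x2 \<in> P" "ch x1 \<noteq> ch x2" by blast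
    have "par (ch x1) \<in> S" "par (ch x2) \<in> S" using parS chp[OF x12(1)] chp[OF x12(2)] True by auto
    moreover have "par (ch x1) \<noteq> par (ch x2)" using inj[of "ch x1" "ch x2"] chp[OF x12(1)] chp[OF x12(2)] x12(3) by blast
    ultimately have "2 \<le> card S" using finS by (intro two_le_card)
    thus ?thesis unfolding mdegree_def S_def .
  qed
qed

lemma leaves: "mleaves V0 E0 ends \<subseteq> P"
  unfolding mleaves_def using deg2 by fastforce

lemma cardV0: "card V0 \<le> card P * Suc R"
proof -
  have eq: "V0 = (\<Union>x\<in>P. (\<lambda>k. (pv^^k) x) ` {..h x})" unfolding V0_def by auto
  have "card V0 \<le> (\<Sum>x\<in>P. card ((\<lambda>k. (pv^^k) x) ` {..h x}))" unfolding eq by (rule card_UN_le[OF finP])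
  also have "\<dots> \<le> (\<Sum>x\<in>P. Suc R)"
  proof (rule sum_mono)
    fix x assume x: "x \<in> P"
    have "card ((\<lambda>k. (pv^^k) x) ` {..h x}) \<le> card {..h x}" by (rule card_image_le) simp
    also have "\<dots> = Suc (h x)" by simp
    also have "h x \<le> R" using hc[OF x] dR[of x] x PU by auto
    finally show "card ((\<lambda>k. (pv^^k) x) ` {..h x}) \<le> Suc R" by simp
  qed
  also have "\<dots> = card P * Suc R" by simp
  finally show ?thesis .
qed

lemma conflict:
  assumes e: "e1 \<in> E0" "e2 \<in> E0" "w e1 \<inter> w e2 \<noteq> {}"
  shows "\<bar>int (mdist_edge E0 ends c e1) - int (mdist_edge E0 ends c e2)\<bar> \<le> int \<beta>"
proof -
  obtain y1 where y1: "y1 \<in> V0" "y1 \<noteq> c" "e1 = par y1" using E0_cases e(1) by blast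
  obtain y2 where y2: "y2 \<in> V0" "y2 \<noteq> c" "e2 = par y2" using E0_cases e(2) by blast
  have u1: "y1 \<in> U" "y1 \<noteq> r" "pv y1 \<in> V0" "\<delta> y1 = Suc (\<delta> (pv y1))" using V0_up[OF y1(1,2)] by auto
  have u2: "y2 \<in> U" "y2 \<noteq> r" "pv y2 \<in> V0" "\<delta> y2 = Suc (\<delta> (pv y2))" using V0_up[OF y2(1,2)] by auto
  have c1: "\<delta> c \<le> \<delta> (pv y1)" using V0_dep[OF u1(3)] by simp
  have c2: "\<delta> c \<le> \<delta> (pv y2)" using V0_dep[OF u2(3)] by simp
  have g1: "\<delta> y1 \<le> \<delta> y2 + \<beta>" using good[OF u1(1,2) u2(1,2)] e y1 y2 by simp
  have g2: "\<delta> y2 \<le> \<delta> y1 + \<beta>" using good[OF u2(1,2) u1(1,2)] e y1 y2 by (simp add: Int_commute)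
  have "mdist_edge E0 ends c e1 = \<delta> (pv y1) - \<delta> c" using mdist_edge_eq[OF y1(1,2)] y1 by simp
  moreover have "mdist_edge E0 ends c e2 = \<delta> (pv y2) - \<delta> c" using mdist_edge_eq[OF y2(1,2)] y2 by simp
  ultimately show ?thesis using c1 c2 g1 g2 u1(4) u2(4) by simp
qed

lemma result:
  "V0 \<subseteq> V \<and> E0 \<subseteq> E \<and> is_mtree V0 E0 ends \<and> c \<in> V0 \<and> card V0 \<le> card P * Suc R \<and> P \<subseteq> V0 \<and>
   E0 \<subseteq> par ` (U - {r}) \<and> card (mleaves V0 E0 ends) \<le> card P \<and>
   (\<forall>e1\<in>E0. \<forall>e2\<in>E0. w e1 \<inter> w e2 \<noteq> {} \<longrightarrow>
      \<bar>int (mdist_edge E0 ends c e1) - int (mdist_edge E0 ends c e2)\<bar> \<le> int \<beta>)"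
proof -
  have "is_mtree V0 E0 ends"
    unfolding is_mtree_def using finV0 cV0 finE0 E0_sub conn acyc by blast
  moreover have "E0 \<subseteq> par ` (U - {r})" unfolding E0_def using V0_up by blast
  moreover have "card (mleaves V0 E0 ends) \<le> card P" by (rule card_mono[OF finP leaves])
  ultimately show ?thesis using V0U UV E0E cV0 cardV0 PV0 conflict by blast
qed

end

lemma logfacts_beta:
  fixes \<gamma> :: real assumes g: "\<gamma> \<ge> 1"
  shows "(3/2::real)^(nat \<lceil>log (3/2) (12*\<gamma>^2)\<rceil>) \<ge> 12*\<gamma>^2 \<and> int (nat \<lceil>log (3/2) (12*\<gamma>^2)\<rceil>) = \<lceil>log (3/2) (12*\<gamma>^2)\<rceil>"
proof -
  define l where "l = log (3/2) (12*\<gamma>^2)"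
  have g1: "1 \<le> \<gamma>^2" using g by (simp add: one_le_power)
  hence pos: "0 < 12*\<gamma>^2" by linarith
  have "0 < l" unfolding l_def using g1 by (subst zero_less_log_cancel_iff) auto
  hence c0: "0 \<le> \<lceil>l\<rceil>" by simp
  hence ib: "int (nat \<lceil>l\<rceil>) = \<lceil>l\<rceil>" by simp
  have "l \<le> real (nat \<lceil>l\<rceil>)" using c0 by (simp add: le_of_int_ceiling)
  hence "(3/2::real) powr l \<le> (3/2) powr real (nat \<lceil>l\<rceil>)" by (intro powr_mono) auto
  moreover have "(3/2::real) powr l = 12*\<gamma>^2" unfolding l_def using pos by simp
  moreover have "(3/2::real) powr real (nat \<lceil>l\<rceil>) = (3/2)^(nat \<lceil>l\<rceil>)" by (simp add: powr_realpow)
  ultimately show ?thesis using ib unfolding l_def by simp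
qed

lemma logfacts_R:
  fixes n :: nat assumes n: "1 \<le> n"
  shows "real n < (3/2::real)^(nat \<lfloor>log (3/2) (real n)\<rfloor> + 1) \<and>
         4 * real (Suc (nat \<lfloor>log (3/2) (real n)\<rfloor> + 1)) \<le> 4 * (log (3/2) (real n) + 2)"
proof -
  define l where "l = log (3/2) (real n)"
  have l0: "0 \<le> l" unfolding l_def using n by simp
  hence f0: "0 \<le> \<lfloor>l\<rfloor>" by simp
  hence rf: "real (nat \<lfloor>l\<rfloor>) = of_int \<lfloor>l\<rfloor>" by simp
  have a: "l < real (nat \<lfloor>l\<rfloor> + 1)" using rf by linarith
  have b: "real (nat \<lfloor>l\<rfloor> + 1) \<le> l + 1" using rf by linarith
  have "(3/2::real) powr l < (3/2) powr real (nat \<lfloor>l\<rfloor> + 1)" using a by (intro powr_less_mono) auto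
  moreover have "(3/2::real) powr l = real n" unfolding l_def using n by simp
  moreover have "(3/2::real) powr real (nat \<lfloor>l\<rfloor> + 1) = (3/2)^(nat \<lfloor>l\<rfloor> + 1)" by (rule powr_realpow) simp
  ultimately show ?thesis using b unfolding l_def by simp
qed



theorem lemma5:
  fixes V :: "'v set" and E :: "'e set" and ends :: "'e \<Rightarrow> 'v set"
    and \<gamma> :: real and \<Sigma> :: "'c set" and w :: "'e \<Rightarrow> 'c set"
  assumes H: "loopless_multigraph V E ends"
    and nonempty: "V \<noteq> {}"
    and mindeg: "\<forall>v\<in>V. mdegree E ends v \<ge> 3"
    and gamma: "\<gamma> \<ge> 1"
    and w_sub: "\<forall>e\<in>E. w e \<subseteq> \<Sigma>"
    and w_card: "\<forall>e\<in>E. finite (w e) \<and> real (card (w e)) \<le> \<gamma>"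
    and c_card: "\<forall>c\<in>\<Sigma>. finite {e\<in>E. c \<in> w e} \<and> real (card {e\<in>E. c \<in> w e}) \<le> \<gamma>"
  shows "\<exists>V0 E0 r0. V0 \<subseteq> V \<and> E0 \<subseteq> E \<and> is_mtree V0 E0 ends \<and> r0 \<in> V0 \<and>
     real (card V0) \<le> 4 * (log (3/2) (real (card V)) + 2) \<and>
     (\<exists>e1 e2. e1 \<in> E - E0 \<and> e2 \<in> E - E0 \<and> e1 \<noteq> e2 \<and> ends e1 \<subseteq> V0 \<and> ends e2 \<subseteq> V0) \<and>
     card (mleaves V0 E0 ends) \<le> 4 \<and>
     (\<forall>e1\<in>E0. \<forall>e2\<in>E0. w e1 \<inter> w e2 \<noteq> {} \<longrightarrow>
        \<bar>int (mdist_edge E0 ends r0 e1) - int (mdist_edge E0 ends r0 e2)\<bar>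
          \<le> \<lceil>log (3/2) (12 * \<gamma>^2)\<rceil>)"
proof -
  define n where "n = card V"
  have finV: "finite V" using H unfolding loopless_multigraph_def by auto
  have n1: "1 \<le> n" unfolding n_def using finV nonempty by (simp add: Suc_leI card_gt_0_iff)
  obtain r where rV: "r \<in> V" using nonempty by auto
  define \<beta> where "\<beta> = nat \<lceil>log (3/2) (12*\<gamma>^2)\<rceil>"
  define R where "R = nat \<lfloor>log (3/2) (real n)\<rfloor> + 1"
  have pb: "(3/2::real)^\<beta> \<ge> 12*\<gamma>^2" and ib: "int \<beta> = \<lceil>log (3/2) (12*\<gamma>^2)\<rceil>"
    using logfacts_beta[OF gamma] unfolding \<beta>_def by auto
  have pR: "real n < (3/2::real)^R" and Rb: "4 * real (Suc R) \<le> 4 * (log (3/2) (real n) + 2)"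
    using logfacts_R[OF n1] unfolding R_def by auto
  obtain U par pv \<delta> where T: "gtree V E ends w \<beta> R r U par pv \<delta>"
    and Tc: "gcomplete E ends w \<beta> r U par \<delta> R"
    using construct[OF H rV, of R R w \<beta>] by blast
  interpret gt V E ends w \<beta> R r U par pv \<delta> using H T by unfold_locales
  define F where "F = par ` (U - {r})"
  define Xs where "Xs = {e\<in>E. e \<notin> F \<and> ends e \<subseteq> U}"
  show ?thesis
  proof (cases "\<exists>e1\<in>Xs. \<exists>e2\<in>Xs. e1 \<noteq> e2")
    case True
    then obtain e1 e2 where e: "e1 \<in> Xs" "e2 \<in> Xs" "e1 \<noteq> e2" by blast
    define P where "P = ends e1 \<union> ends e2"
    have e1E: "e1 \<in> E" and e2E: "e2 \<in> E" using e unfolding Xs_def by auto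
    have PU: "P \<subseteq> U" using e unfolding P_def Xs_def by auto
    have finP: "finite P" unfolding P_def using finends e1E e2E by auto
    have cP: "card P \<le> 4"
    proof -
      have "card P \<le> card (ends e1) + card (ends e2)" unfolding P_def by (rule card_Un_le)
      thus ?thesis using ends2[OF e1E] ends2[OF e2E] by simp
    qed
    have Pne: "P \<noteq> {}" using ends2[OF e1E] unfolding P_def by auto
    define C where "C = {d. \<forall>x\<in>P. \<exists>k\<le>\<delta> x. (pv^^k) x = d}"
    have rC: "r \<in> C" unfolding C_def
    proof (intro CollectI ballI)
      fix x assume x: "x \<in> P"
      have "(pv^^(\<delta> x)) x \<in> U" "\<delta> ((pv^^(\<delta> x)) x) = 0" using chain[of x "\<delta> x"] x PU by auto
      hence "(pv^^(\<delta> x)) x = r" using d0 by blast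
      thus "\<exists>k\<le>\<delta> x. (pv^^k) x = r" by blast
    qed
    have Cb: "\<forall>d. d \<in> C \<longrightarrow> \<delta> d < Suc R"
    proof (intro allI impI)
      fix d assume "d \<in> C"
      obtain x where x: "x \<in> P" using Pne by auto
      then obtain k where "k \<le> \<delta> x" "(pv^^k) x = d" using \<open>d \<in> C\<close> unfolding C_def by blast
      hence "d \<in> U" using chain[of x k] x PU by auto
      thus "\<delta> d < Suc R" using dR by (simp add: le_imp_less_Suc)
    qed
    obtain c where cC: "c \<in> C" and cmax: "\<forall>d. d \<in> C \<longrightarrow> \<delta> d \<le> \<delta> c"
      using Lattices_Big.ex_has_greatest_nat[of "\<lambda>d. d \<in> C" r \<delta> "Suc R"] rC Cb by blast
    interpret gt2 V E ends w \<beta> R r U par pv \<delta> P c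
      by unfold_locales (use PU Pne finP cC cmax in \<open>auto simp: C_def\<close>)
    have res: "V0 \<subseteq> V \<and> E0 \<subseteq> E \<and> is_mtree V0 E0 ends \<and> c \<in> V0 \<and> card V0 \<le> card P * Suc R \<and> P \<subseteq> V0 \<and>
       E0 \<subseteq> par ` (U - {r}) \<and> card (mleaves V0 E0 ends) \<le> card P \<and>
       (\<forall>e1\<in>E0. \<forall>e2\<in>E0. w e1 \<inter> w e2 \<noteq> {} \<longrightarrow>
          \<bar>int (mdist_edge E0 ends c e1) - int (mdist_edge E0 ends c e2)\<bar> \<le> int \<beta>)"
      by (rule result)
    have "card V0 \<le> 4 * Suc R" using res cP by (meson le_trans mult_le_mono1)
    hence "real (card V0) \<le> 4 * real (Suc R)" by (metis of_nat_le_iff of_nat_mult of_nat_numeral)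
    hence cV: "real (card V0) \<le> 4 * (log (3/2) (real (card V)) + 2)" using Rb unfolding n_def by linarith
    have ee: "e1 \<in> E - E0 \<and> e2 \<in> E - E0 \<and> e1 \<noteq> e2 \<and> ends e1 \<subseteq> V0 \<and> ends e2 \<subseteq> V0"
      using e res unfolding Xs_def F_def P_def by auto
    show ?thesis
      apply (rule exI[of _ V0], rule exI[of _ E0], rule exI[of _ c])
      using res cV ee cP ib by auto
  next
    case False
    define X0 where "X0 = \<Union> (ends ` Xs)"
    have ss: "\<forall>a\<in>Xs. \<forall>b\<in>Xs. a = b" using False by blast
    have cX0: "card X0 \<le> 2"
    proof (cases "Xs = {}")
      case True then show ?thesis unfolding X0_def by simp
    next
      case False
      then obtain e0 where "e0 \<in> Xs" by auto
      hence "Xs = {e0}" using ss by auto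
      moreover have "e0 \<in> E" using \<open>e0 \<in> Xs\<close> unfolding Xs_def by auto
      ultimately show ?thesis unfolding X0_def using ends2[of e0] by simp
    qed
    have finX0: "finite X0" unfolding X0_def Xs_def using finE finends by auto
    have X0c: "\<forall>v\<in>U. card {e\<in>E. e \<notin> par ` (U - {r}) \<and> ends e \<subseteq> U \<and> v \<in> ends e} \<le> (if v \<in> X0 then 1 else 0)"
    proof
      fix v assume "v \<in> U"
      define S where "S = {e\<in>E. e \<notin> par ` (U - {r}) \<and> ends e \<subseteq> U \<and> v \<in> ends e}"
      have SX: "S \<subseteq> Xs" unfolding S_def Xs_def F_def by auto
      show "card S \<le> (if v \<in> X0 then 1 else 0)"
      proof (cases "v \<in> X0")
        case True
        have finS: "finite S" unfolding S_def using finE by simp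
        have "\<forall>a\<in>S. \<forall>b\<in>S. a = b" using SX ss by blast
        hence "card S \<le> Suc 0" using card_le_Suc0_iff_eq[OF finS] by blast
        thus ?thesis using True by simp
      next
        case False
        hence "S = {}" unfolding S_def X0_def Xs_def F_def by auto
        thus ?thesis by simp
      qed
    qed
    define a where "a k = card (L k)" for k
    define d where "d k = card (L k \<inter> X0)" for k
    have L0: "L 0 = {r}" unfolding L_def using rU dr d0 by blast
    have a0: "a 0 = 1" unfolding a_def L0 by simp
    have rec: "\<forall>k<R. 2 * real (a k) + (if k = 0 then 1 else 0)
               \<le> real (a (Suc k)) + real (d k) + \<gamma>^2 * real (\<Sum>j<k-\<beta>. a (Suc j))"
      unfolding a_def d_def using level_count[OF Tc mindeg w_sub w_card c_card X0c] by blast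
    have dsum: "(\<Sum>k<R. d k) \<le> 2"
    proof -
      have "(\<Sum>k<R. d k) = card (\<Union>k<R. L k \<inter> X0)" unfolding d_def
        by (rule card_UN_disjoint[symmetric]) (simp, simp add: finL, auto simp: L_def)
      also have "\<dots> \<le> card X0" by (rule card_mono[OF finX0]) auto
      finally show ?thesis using cX0 by simp
    qed
    have dd0: "d 0 \<le> 1" unfolding d_def using L0 by (simp add: card_le_Suc0_iff_eq)
    have "real (a R) \<ge> (3/2)^R" by (rule growth[OF a0 rec dsum dd0 pb gamma])
    moreover have "a R \<le> n" unfolding a_def n_def L_def by (rule card_mono[OF finV]) (use UV in auto)
    ultimately show ?thesis using pR by simp
  qed
qed

end
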